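(* Let $p$ be an odd prime, let $\nu_k=2\cos\left(\frac{(2k-1)\pi}{2p}\right)$ for $1\le k\le p$, and let $\theta_1,\dots,\theta_{p-1}$ be the nodes $\nu_k$ with $k\ne\frac{p+1}{2}$, listed in the order: $\nu_{(p+1)/2}$ is replaced by $\nu_1$ in the list $\nu_1,\dots,\nu_p$ and the first entry is removed. Let $R_i^*(x)\in\mathbb{Z}[x]$, $1\le i\le p-1$, be monic of degree $i$ with zero constant term, given by $R_i^*(x)=2T_i(x/2)+2r_i$ where $r_i=0$ for $i$ odd, $r_i=1$ for $i\equiv2\pmod4$, $r_i=-1$ for $i\equiv0\pmod4$, and let $N_{4p}=(R_i^*(\theta_j))_{1\le j\le p-1,\,1\le i\le p-1}$. Then $$N_{4p}=P\,U_{4p},\qquad P=\mathrm{diag}(\theta_1,\dots,\theta_{p-1}),\qquad U_{4p}=\big(r_i^*(\theta_j)\big)_{1\le j\le p-1,\ 0\le i\le p-2},$$ where for each $i\in\{0,\dots,p-2\}$ the polynomial $r_i^*(x)\in\mathbb{Z}[x]$ is monic of degree $i$. Moreover $\mathrm{Cond}(U_{4p})\le p^3(p+1)(2p-1)^2$.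
   Context: $T_i$ is the Tchebycheff polynomial of the first kind ($T_0=1$, $T_1=x$, $T_i=2xT_{i-1}-T_{i-2}$). For an invertible complex matrix $A$, $\|A\|=\sqrt{\mathrm{Tr}(AA^* )}$ is the Frobenius norm and $\mathrm{Cond}(A)=\|A\|\,\|A^{-1}\|$. The matrix $N_{4p}$ is the lower-right $(p-1)\times(p-1)$ block of $FQ_{4p}C$, where $Q_{4p}$ is $(2T_i(\nu_k/2))_{k,i}$ with rows $1$ and $\frac{p+1}{2}$ interchanged, $F$ subtracts the first row from all other rows, and $C$ adds $r_i$ times column $0$ to column $i$. *)

theory Defs
  imports "Jordan_Normal_Form.Matrix" "HOL-Computational_Algebra.Polynomial"
begin

fun cheb :: "nat \<Rightarrow> real \<Rightarrow> real" where
  "cheb 0 x = 1"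
| "cheb (Suc 0) x = x"
| "cheb (Suc (Suc n)) x = 2 * x * cheb (Suc n) x - cheb n x"

definition nu :: "nat \<Rightarrow> nat \<Rightarrow> real" where
  "nu p k = 2 * cos ((2 * real k - 1) * pi / (2 * real p))"

definition theta :: "nat \<Rightarrow> nat \<Rightarrow> real" where
  "theta p j = (if j + 1 = (p + 1) div 2 then nu p 1 else nu p (j + 1))"

definition rcoef :: "nat \<Rightarrow> real" where
  "rcoef i = (if odd i then 0 else if i mod 4 = 2 then 1 else -1)"

definition Rstar :: "nat \<Rightarrow> real \<Rightarrow> real" where
  "Rstar i x = 2 * cheb i (x / 2) + 2 * rcoef i"

text \<open>N_{4p} = (R_i^*(theta_j))_{1<=j<=p-1, 1<=i<=p-1}, stored 0-based.\<close>
definition N4p :: "nat \<Rightarrow> real mat" where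
  "N4p p = mat (p - 1) (p - 1) (\<lambda>(j, i). Rstar (i + 1) (theta p (j + 1)))"

definition Pdiag :: "nat \<Rightarrow> real mat" where
  "Pdiag p = mat_diag (p - 1) (\<lambda>j. theta p (j + 1))"

definition U4p :: "nat \<Rightarrow> (nat \<Rightarrow> int poly) \<Rightarrow> real mat" where
  "U4p p r = mat (p - 1) (p - 1) (\<lambda>(j, i). poly (map_poly of_int (r i)) (theta p (j + 1)))"

definition frob :: "real mat \<Rightarrow> real" where
  "frob A = sqrt (\<Sum>i<dim_row A. \<Sum>j<dim_col A. (A $$ (i, j))^2)"

definition mat_inverse :: "real mat \<Rightarrow> real mat" where
  "mat_inverse A = (THE B. B \<in> carrier_mat (dim_row A) (dim_row A) \<and>
      A * B = 1\<^sub>m (dim_row A) \<and> B * A = 1\<^sub>m (dim_row A))"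

definition Cond :: "real mat \<Rightarrow> real" where
  "Cond A = frob A * frob (mat_inverse A)"

end

theory Submission
  imports Defs "Jordan_Normal_Form.Determinant"
begin

definition rc :: "nat \<Rightarrow> int" where
  "rc i = (if odd i then 0 else if i mod 4 = 2 then 1 else -1)"

lemma rc_real: "real_of_int (rc i) = rcoef i"
  by (simp add: rc_def rcoef_def)

lemma rcoef_SS: "rcoef (Suc (Suc n)) = - rcoef n"
proof -
  have a: "odd (Suc (Suc n)) = odd n" by simp
  have b: "even n \<Longrightarrow> (Suc (Suc n) mod 4 = 2) = (\<not> n mod 4 = 2)" by presburger
  show ?thesis unfolding rcoef_def using a b by auto
qed

fun qp :: "nat \<Rightarrow> int poly" where
  "qp 0 = 0"
| "qp (Suc 0) = 1"
| "qp (Suc (Suc n)) = pCons 0 (qp (Suc n)) - qp n - [: 2 * rc (Suc n) :]"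

definition Qf :: "nat \<Rightarrow> real \<Rightarrow> real" where
  "Qf n x = poly (map_poly of_int (qp n)) x"

lemma map_poly_of_int_diff: "map_poly (of_int::int\<Rightarrow>real) (a - b) = map_poly of_int a - map_poly of_int b"
  by (rule poly_eqI) (simp add: coeff_map_poly)

lemma Qf_SS: "Qf (Suc (Suc n)) x = x * Qf (Suc n) x - Qf n x - 2 * rcoef (Suc n)"
  by (simp add: Qf_def map_poly_of_int_diff rc_real[symmetric] map_poly_pCons)

lemma Qf_eval: "x * Qf n x = Rstar n x"
proof (induction n rule: qp.induct)
  case 1 then show ?case by (simp add: Qf_def Rstar_def rcoef_def)
next
  case 2 then show ?case by (simp add: Qf_def Rstar_def rcoef_def)
next
  case (3 n)
  have "x * Qf (Suc (Suc n)) x = x * (x * Qf (Suc n) x) - x * Qf n x - 2 * x * rcoef (Suc n)"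
    by (simp add: Qf_SS algebra_simps)
  also have "\<dots> = Rstar (Suc (Suc n)) x"
    using 3 by (simp add: Rstar_def rcoef_SS algebra_simps)
  finally show ?case .
qed

lemma cheb_cos2: "cheb n (cos t) = cos (real n * t) \<and> cheb (Suc n) (cos t) = cos (real (Suc n) * t)"
proof (induction n)
  case (Suc n)
  have "cos (real (Suc (Suc n)) * t) = 2 * cos t * cos (real (Suc n) * t) - cos (real n * t)"
    using cos_times_cos[of t "real (Suc n) * t"]
    by (simp add: algebra_simps)
  then show ?case using Suc by simp
qed auto

lemma cheb_cos: "cheb n (cos t) = cos (real n * t)"
  using cheb_cos2 by blast

lemma qp_deg_le: "degree (qp m) \<le> m" and qp_deg_eq: "degree (qp (Suc n)) = n \<and> coeff (qp (Suc n)) n = 1"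
proof -
  have *: "degree (qp (Suc n)) = n \<and> coeff (qp (Suc n)) n = 1" for n
  proof (induction n rule: nat_less_induct)
    case (1 n)
    show ?case
    proof (cases n)
      case 0 then show ?thesis by simp
    next
      case Sm: (Suc m)
      note IH = 1[rule_format]
      have h1: "degree (qp (Suc m)) = m" "coeff (qp (Suc m)) m = 1" using IH[of m] Sm by auto
      have nz: "qp (Suc m) \<noteq> 0" using h1 by auto
      have dA: "degree (pCons 0 (qp (Suc m))) = Suc m" using h1 nz by simp
      have dqm: "degree (qp m) \<le> m"
      proof (cases m)
        case 0 then show ?thesis by simp
      next
        case (Suc m')
        have "m' < n" using Suc Sm by simp
        then have "degree (qp m) = m'" using IH[of m'] Suc by auto
        then show ?thesis using Suc by simp
      qed
      have dB: "degree (qp m + [: 2 * rc (Suc m) :]) \<le> m"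
        by (rule degree_add_le) (use dqm in auto)
      have eq: "qp (Suc n) = pCons 0 (qp (Suc m)) - (qp m + [: 2 * rc (Suc m) :])"
        using Sm by simp
      have dX: "degree (qp (Suc n)) \<le> Suc m"
        unfolding eq by (rule degree_diff_le) (use dA dB in auto)
      have cX: "coeff (qp (Suc n)) (Suc m) = 1"
        unfolding eq using dB h1 dqm by (simp add: coeff_eq_0)
      have "degree (qp (Suc n)) = Suc m"
        using dX cX by (metis le_antisym le_degree zero_neq_one)
      then show ?thesis using cX Sm by simp
    qed
  qed
  show "degree (qp (Suc n)) = n \<and> coeff (qp (Suc n)) n = 1" by (rule *)
  show "degree (qp m) \<le> m" using *[of "m - 1"] by (cases m) auto
qed

lemma tele: "2 * sin a * (\<Sum>k<n. cos (real (2*k+1) * a)) = sin (real (2*n) * a)"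
proof (induction n)
  case (Suc n)
  have "2 * sin a * cos (real (2*n+1) * a) = sin (real (2 * Suc n) * a) - sin (real (2*n) * a)"
    using sin_times_cos[of a "real (2*n+1) * a"]
    by (simp add: algebra_simps)
  then show ?case using Suc by (simp add: algebra_simps)
qed simp

definition phi :: "nat \<Rightarrow> nat \<Rightarrow> real" where
  "phi p k = (2 * real (Suc k) - 1) * pi / (2 * real p)"

lemma nu_phi: "nu p (Suc k) = 2 * cos (phi p k)"
  by (simp add: nu_def phi_def)

lemma cosSum_zero:
  assumes "0 < m" "m < 2 * p"
  shows "(\<Sum>k<p. cos (real m * phi p k)) = 0"
proof -
  define a where "a = real m * pi / (2 * real p)"
  have p0: "p > 0" using assms by simp
  have eq: "real m * phi p k = real (2*k+1) * a" for k
    using p0 by (simp add: phi_def a_def field_simps)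
  have "0 < a" using assms p0 by (simp add: a_def)
  moreover have "a < pi" using assms p0 by (simp add: a_def field_simps)
  ultimately have "sin a > 0" by (rule sin_gt_zero)
  moreover have "sin (real (2*p) * a) = 0"
  proof -
    have "real (2*p) * a = real m * pi" using p0 by (simp add: a_def field_simps)
    then show ?thesis by simp
  qed
  ultimately show ?thesis using tele[of a p] by (simp add: eq)
qed

lemma cos_diff_nat: "cos (real a * t - real b * t) = cos (real (if b \<le> a then a - b else b - a) * t)"
proof (cases "b \<le> a")
  case True then show ?thesis by (simp add: of_nat_diff left_diff_distrib)
next
  case False
  then have "real a * t - real b * t = - (real (b - a) * t)" by (simp add: of_nat_diff left_diff_distrib)
  then show ?thesis using False by (simp only: cos_minus) simp
qed

lemma orth:
  assumes "0 < a" "a < p" "0 < b" "b < p"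
  shows "(\<Sum>k<p. cos (real a * phi p k) * cos (real b * phi p k)) = (if a = b then real p / 2 else 0)"
proof -
  let ?d = "if b \<le> a then a - b else b - a"
  have "(\<Sum>k<p. cos (real a * phi p k) * cos (real b * phi p k))
      = ((\<Sum>k<p. cos (real ?d * phi p k)) + (\<Sum>k<p. cos (real (a + b) * phi p k))) / 2"
  proof -
    have pt: "cos (real a * x) * cos (real b * x) = (cos (real ?d * x) + cos (real (a+b) * x)) / 2" for x
      unfolding cos_times_cos cos_diff_nat by (simp add: distrib_right)
    show ?thesis unfolding pt sum.distrib[symmetric] sum_divide_distrib by (rule refl)
  qed
  also have "(\<Sum>k<p. cos (real (a + b) * phi p k)) = 0"
    by (rule cosSum_zero) (use assms in auto)
  also have "(\<Sum>k<p. cos (real ?d * phi p k)) = (if a = b then real p else 0)"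
  proof (cases "a = b")
    case True then show ?thesis by simp
  next
    case False
    then show ?thesis by (simp only: if_False) (rule cosSum_zero, use assms in auto)
  qed
  finally show ?thesis by (cases "a = b") simp_all
qed

lemma sum_single:
  assumes "0 < a" "a < p"
  shows "(\<Sum>k<p. cos (real a * phi p k)) = 0"
  by (rule cosSum_zero) (use assms in auto)

lemma sum_theta:
  assumes "odd p" "p \<ge> 3" "g 0 = 0"
  shows "(\<Sum>j<p-1. g (theta p (Suc j))) = (\<Sum>k<p. g (nu p (Suc k)))"
proof -
  obtain m where pm: "p = 2*m+1" using assms(1) oddE by blast
  have m1: "m \<ge> 1" using pm assms by simp
  have mid: "nu p (Suc m) = 0"
  proof -
    have h: "(2 * real (Suc m) - 1) * pi / (2 * real p) = pi / 2" using pm by (simp add: field_simps)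
    have "nu p (Suc m) = 2 * cos (pi / 2)" unfolding nu_def h by (rule refl)
    then show ?thesis by simp
  qed
  have pt: "g (theta p (Suc j)) = g (nu p (Suc (Suc j))) + (if j = m - 1 then g (nu p 1) else 0)" for j
  proof (cases "j = m - 1")
    case True
    then have "Suc (Suc j) = Suc m" using m1 by simp
    then show ?thesis using True pm assms(3) mid by (simp add: theta_def)
  next
    case False
    then have "Suc j + 1 \<noteq> (p+1) div 2" using pm m1 by simp
    then show ?thesis using False by (simp add: theta_def)
  qed
  have "m - 1 < 2*m" using m1 by simp
  have "(\<Sum>j<p-1. g (theta p (Suc j))) = (\<Sum>j<2*m. g (nu p (Suc (Suc j)))) + g (nu p 1)"
    unfolding pt sum.distrib using pm m1 \<open>m - 1 < 2*m\<close> by (simp add: sum.delta)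
  also have "\<dots> = (\<Sum>k<p. g (nu p (Suc k)))"
    using pm by (simp add: sum.lessThan_Suc_shift add.commute del: sum.lessThan_Suc)
  finally show ?thesis .
qed

lemma cos_lb: "1 - x^2/2 \<le> cos (x::real)"
proof -
  have "cos x = 1 - 2 * sin (x/2) ^ 2" using cos_double_sin[of "x/2"] by simp
  moreover have "sin (x/2) ^ 2 \<le> (x/2)^2"
    using abs_sin_x_le_abs_x[of "x/2"] by (metis abs_le_square_iff)
  ultimately show ?thesis by (simp add: power_divide)
qed

lemma sin_lb:
  assumes "0 \<le> x"
  shows "x - x^3/6 \<le> sin (x::real)"
proof -
  have "(\<lambda>t. sin t - t + t^3/6) 0 \<le> (\<lambda>t. sin t - t + t^3/6) x"
  proof (rule DERIV_nonneg_imp_nondecreasing[OF assms])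
    fix t :: real
    have "((\<lambda>t. sin t - t + t^3/6) has_real_derivative (cos t - 1 + t^2/2)) (at t)"
      by (auto intro!: derivative_eq_intros simp: power2_eq_square)
    moreover have "cos t - 1 + t^2/2 \<ge> 0" using cos_lb[of t] by simp
    ultimately show "\<exists>y. ((\<lambda>t. sin t - t + t^3/6) has_real_derivative y) (at t) \<and> y \<ge> 0" by blast
  qed
  then show ?thesis by simp
qed

lemma nu_lb:
  assumes "1 \<le> k" "k \<le> p" "2*k \<noteq> p+1" "odd p"
  shows "\<bar>nu p k\<bar> \<ge> 1 / real p"
proof -
  have p0: "real p > 0" using assms by simp
  define m where "m = 2 * real k - 1 - real p"
  have nat_dis: "2*k+1 \<le> p \<or> p+2 \<le> 2*k" using assms by presburger
  then have m1: "\<bar>m\<bar> \<ge> 1"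
  proof
    assume "2*k+1 \<le> p" then have "2 * real k + 1 \<le> real p" by linarith
    then show ?thesis by (simp add: m_def)
  next
    assume "p+2 \<le> 2*k" then have "real p + 2 \<le> 2 * real k" by linarith
    then show ?thesis by (simp add: m_def)
  qed
  have m2: "\<bar>m\<bar> \<le> real p - 1" unfolding m_def using assms by auto
  have arg: "(2 * real k - 1) * pi / (2 * real p) = pi/2 + m * pi / (2 * real p)"
    unfolding m_def using p0 by (simp add: field_simps)
  have nuv: "\<bar>nu p k\<bar> = 2 * \<bar>sin (m * pi / (2 * real p))\<bar>"
    unfolding nu_def arg by (simp add: cos_add)
  define s where "s = \<bar>m\<bar> * pi / (2 * real p)"
  have abs_eq: "\<bar>sin (m * pi / (2 * real p))\<bar> = sin s"
  proof (cases "m \<ge> 0")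
    case True
    have "s \<le> pi" unfolding s_def using m2 p0 by (simp add: field_simps)
    then have "sin s \<ge> 0" by (intro sin_ge_zero) (auto simp: s_def)
    then show ?thesis using True by (simp add: s_def)
  next
    case False
    have "s \<le> pi" unfolding s_def using m2 p0 by (simp add: field_simps)
    then have "sin s \<ge> 0" by (intro sin_ge_zero) (auto simp: s_def)
    moreover have "m * pi / (2 * real p) = - s" using False by (simp add: s_def)
    ultimately show ?thesis by simp
  qed
  define x where "x = pi / (2 * real p)"
  have x0: "0 \<le> x" unfolding x_def using p0 by simp
  have xs: "x \<le> s" unfolding x_def s_def using m1 p0 by (simp add: field_simps)
  have s2: "s \<le> pi/2" unfolding s_def using m2 p0 by (simp add: field_simps)
  have "sin x \<le> sin s" by (rule sin_monotone_2pi_le) (use x0 xs s2 in auto)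
  moreover have "x - x^3/6 \<le> sin x" by (rule sin_lb[OF x0])
  moreover have "x \<le> 1"
  proof -
    have "p \<ge> 3" using assms by presburger
    then have "real p \<ge> 3" by simp
    then have "x \<le> pi / 6" unfolding x_def by (simp add: field_simps)
    then show ?thesis using pi_less_4 by simp
  qed
  moreover have "x^3 \<le> x"
  proof -
    have "x^3 = x * x^2" by (simp add: power3_eq_cube power2_eq_square)
    also have "\<dots> \<le> x * 1" using \<open>x \<le> 1\<close> x0 by (intro mult_left_mono) (auto simp: power_le_one)
    finally show ?thesis by simp
  qed
  moreover have "x \<ge> 1 / real p" unfolding x_def using pi_ge_two p0 by (simp add: field_simps)
  ultimately have "sin s \<ge> 5 / 6 * (1 / real p)" by linarith
  then show ?thesis unfolding nuv abs_eq using p0 by (simp add: field_simps)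
qed

lemma theta_cos: "\<exists>t. theta p j = 2 * cos t"
  unfolding theta_def nu_def by auto

lemma theta_le: "\<bar>theta p j\<bar> \<le> 2"
  using theta_cos[of p j] abs_cos_le_one by (metis abs_mult abs_numeral mult_le_cancel_left1 mult.commute zero_less_numeral mult_le_cancel_left_pos mult.right_neutral)

lemma cheb_theta: "\<bar>2 * cheb n (theta p j / 2)\<bar> \<le> 2"
proof -
  obtain t where "theta p j = 2 * cos t" using theta_cos by blast
  then show ?thesis using abs_cos_le_one[of "real n * t"] by (simp add: cheb_cos abs_mult)
qed

lemma theta_lb:
  assumes "odd p" "p \<ge> 3" "j < p - 1"
  shows "\<bar>theta p (Suc j)\<bar> \<ge> 1 / real p"
proof (cases "Suc j + 1 = (p + 1) div 2")
  case True
  then have "theta p (Suc j) = nu p 1" by (simp add: theta_def)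
  moreover have "\<bar>nu p 1\<bar> \<ge> 1 / real p" by (rule nu_lb) (use assms in auto)
  ultimately show ?thesis by simp
next
  case False
  then have "theta p (Suc j) = nu p (Suc j + 1)" by (simp add: theta_def)
  moreover have "\<bar>nu p (Suc j + 1)\<bar> \<ge> 1 / real p"
    by (rule nu_lb) (use assms False in presburger)+
  ultimately show ?thesis by simp
qed

lemma Rstar_bd: "\<bar>Rstar n (theta p j)\<bar> \<le> 4"
proof -
  have "\<bar>rcoef n\<bar> \<le> 1" by (simp add: rcoef_def)
  then show ?thesis using cheb_theta[of n p j] unfolding Rstar_def by linarith
qed

lemma frob_bd:
  assumes "A \<in> carrier_mat n n" "\<And>i j. i < n \<Longrightarrow> j < n \<Longrightarrow> \<bar>A $$ (i,j)\<bar> \<le> B" "0 \<le> B"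
  shows "frob A \<le> real n * B"
proof -
  have "(\<Sum>i<dim_row A. \<Sum>j<dim_col A. (A $$ (i, j))^2) \<le> (\<Sum>i<n. \<Sum>j<n. B^2)"
    using assms(1)
  proof (simp only: carrier_matD, intro sum_mono)
    fix i j assume "i \<in> {..<n}" "j \<in> {..<n}"
    then have "\<bar>A $$ (i,j)\<bar> \<le> B" using assms(2) by auto
    then show "(A $$ (i, j))^2 \<le> B^2" by (metis abs_ge_zero abs_le_square_iff power2_abs power_mono)
  qed
  also have "\<dots> = (real n * B)^2" by (simp add: power2_eq_square)
  finally have "frob A \<le> sqrt ((real n * B)^2)" unfolding frob_def by (rule real_sqrt_le_mono)
  also have "\<dots> = real n * B" using assms(3) by simp
  finally show ?thesis .
qed

lemma WU_entry:
  assumes "odd p" "p \<ge> 3" "i < p - 1" "i' < p - 1"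
  shows "(\<Sum>j<p-1. (theta p (Suc j) * (2 * cheb (Suc i) (theta p (Suc j) / 2)) / (2 * real p))
            * Qf (Suc i') (theta p (Suc j))) = (if i = i' then 1 else 0)"
proof -
  define g where "g x = x * (2 * cheb (Suc i) (x/2)) / (2 * real p) * Qf (Suc i') x" for x
  have g0: "g 0 = 0" by (simp add: g_def)
  have "(\<Sum>j<p-1. (theta p (Suc j) * (2 * cheb (Suc i) (theta p (Suc j) / 2)) / (2 * real p))
            * Qf (Suc i') (theta p (Suc j))) = (\<Sum>j<p-1. g (theta p (Suc j)))"
    by (simp add: g_def)
  also have "\<dots> = (\<Sum>k<p. g (nu p (Suc k)))" by (rule sum_theta[where g=g, OF assms(1,2) g0])
  also have "\<dots> = (\<Sum>k<p. (4 * (cos (real (Suc i) * phi p k) * cos (real (Suc i') * phi p k))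
       + 4 * rcoef (Suc i') * cos (real (Suc i) * phi p k)) / (2 * real p))"
  proof (rule sum.cong[OF refl])
    fix k
    have "g (nu p (Suc k)) = 2 * cheb (Suc i) (nu p (Suc k) / 2) * (nu p (Suc k) * Qf (Suc i') (nu p (Suc k))) / (2 * real p)"
      by (simp add: g_def)
    also have "\<dots> = 2 * cheb (Suc i) (nu p (Suc k) / 2) * Rstar (Suc i') (nu p (Suc k)) / (2 * real p)"
      by (simp add: Qf_eval)
    also have "\<dots> = (4 * (cos (real (Suc i) * phi p k) * cos (real (Suc i') * phi p k))
       + 4 * rcoef (Suc i') * cos (real (Suc i) * phi p k)) / (2 * real p)"
      unfolding Rstar_def nu_phi by (simp add: cheb_cos algebra_simps)
    finally show "g (nu p (Suc k)) = \<dots>" .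
  qed
  also have "\<dots> = (4 * (\<Sum>k<p. cos (real (Suc i) * phi p k) * cos (real (Suc i') * phi p k))
       + 4 * rcoef (Suc i') * (\<Sum>k<p. cos (real (Suc i) * phi p k))) / (2 * real p)"
    by (simp add: sum_divide_distrib[symmetric] sum.distrib sum_distrib_left)
  also have "\<dots> = (if i = i' then 1 else 0)"
  proof -
    have o1: "(\<Sum>k<p. cos (real (Suc i) * phi p k) * cos (real (Suc i') * phi p k))
       = (if Suc i = Suc i' then real p / 2 else 0)" by (rule orth) (use assms in auto)
    have o2: "(\<Sum>k<p. cos (real (Suc i) * phi p k)) = 0" by (rule sum_single) (use assms in auto)
    have "real p > 0" using assms by simp
    then show ?thesis unfolding o1 o2 by simp
  qed
  finally show ?thesis .
qed

lemma frob_nonneg: "frob A \<ge> 0"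
  unfolding frob_def by (intro real_sqrt_ge_zero sum_nonneg) auto

theorem mainTheorem7:
  fixes p :: nat
  assumes "prime p" and "odd p"
  shows "\<exists>r :: nat \<Rightarrow> int poly.
           (\<forall>i \<le> p - 2. lead_coeff (r i) = 1 \<and> degree (r i) = i) \<and>
           N4p p = Pdiag p * U4p p r \<and>
           invertible_mat (U4p p r) \<and>
           Cond (U4p p r) \<le> real p ^ 3 * (real p + 1) * (2 * real p - 1) ^ 2"
proof -
  have p3: "p \<ge> 3"
  proof -
    have "p \<ge> 2" using assms(1) prime_ge_2_nat by blast
    moreover have "p \<noteq> 2" using assms(2) by auto
    ultimately show ?thesis by simp
  qed
  have pr: "real p \<ge> 3" using p3 by simp
  define r where "r i = qp (Suc i)" for i
  define n where "n = p - 1"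
  define U where "U = U4p p r"
  define W where "W = mat n n (\<lambda>(i, j). theta p (Suc j) * (2 * cheb (Suc i) (theta p (Suc j) / 2)) / (2 * real p))"
  have Uent: "U $$ (j, i) = Qf (Suc i) (theta p (Suc j))" if "j < n" "i < n" for i j
    using that by (simp add: U_def U4p_def n_def r_def Qf_def)
  have Uc: "U \<in> carrier_mat n n" by (simp add: U_def U4p_def n_def)
  have Wc: "W \<in> carrier_mat n n" by (simp add: W_def)
  have deg: "\<forall>i \<le> p - 2. lead_coeff (r i) = 1 \<and> degree (r i) = i"
    using qp_deg_eq by (simp add: r_def)
  have NPU: "N4p p = Pdiag p * U"
  proof -
    have "Pdiag p * U = mat n n (\<lambda>(i, j). theta p (Suc i) * U $$ (i, j))"
      unfolding Pdiag_def n_def[symmetric] using mat_diag_mult_left[OF Uc, of "\<lambda>j. theta p (j+1)"] by simp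
    also have "\<dots> = N4p p"
      by (rule eq_matI) (auto simp: N4p_def n_def Uent Qf_eval)
    finally show ?thesis by simp
  qed
  have WU: "W * U = 1\<^sub>m n"
  proof (rule eq_matI)
    fix i i' assume ii: "i < dim_row (1\<^sub>m n :: real mat)" "i' < dim_col (1\<^sub>m n :: real mat)"
    then have ii': "i < p - 1" "i' < p - 1" by (auto simp: n_def)
    have "(W * U) $$ (i, i') = (\<Sum>j\<in>{0..<n}. W $$ (i, j) * U $$ (j, i'))"
      using ii Uc Wc by (simp add: scalar_prod_def)
    also have "\<dots> = (\<Sum>j<p-1. (theta p (Suc j) * (2 * cheb (Suc i) (theta p (Suc j) / 2)) / (2 * real p))
            * Qf (Suc i') (theta p (Suc j)))"
      using ii by (intro sum.cong) (auto simp: W_def Uent n_def)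
    also have "\<dots> = (if i = i' then 1 else 0)" by (rule WU_entry[OF assms(2) p3 ii'])
    finally show "(W * U) $$ (i, i') = 1\<^sub>m n $$ (i, i')" using ii by simp
  qed (use Uc Wc in auto)
  have UW: "U * W = 1\<^sub>m n" by (rule mat_mult_left_right_inverse[OF Wc Uc WU])
  have inv: "invertible_mat U"
    unfolding invertible_mat_def inverts_mat_def using Uc Wc UW WU by auto
  have minv: "Defs.mat_inverse U = W"
    unfolding Defs.mat_inverse_def
  proof (rule the_equality)
    show "W \<in> carrier_mat (dim_row U) (dim_row U) \<and> U * W = 1\<^sub>m (dim_row U) \<and> W * U = 1\<^sub>m (dim_row U)"
      using Uc Wc UW WU by auto
  next
    fix B assume B: "B \<in> carrier_mat (dim_row U) (dim_row U) \<and> U * B = 1\<^sub>m (dim_row U) \<and> B * U = 1\<^sub>m (dim_row U)"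
    then have Bc: "B \<in> carrier_mat n n" and UB: "U * B = 1\<^sub>m n" using Uc by auto
    have "B = (W * U) * B" using WU Bc by simp
    also have "\<dots> = W * (U * B)" using Wc Uc Bc by (rule assoc_mult_mat)
    also have "\<dots> = W" using UB Wc by simp
    finally show "B = W" .
  qed
  have fU: "frob U \<le> real n * (4 * real p)"
  proof (rule frob_bd[OF Uc])
    fix j i assume ji: "j < n" "i < n"
    have lb: "\<bar>theta p (Suc j)\<bar> \<ge> 1 / real p" using theta_lb[OF assms(2) p3] ji by (simp add: n_def)
    have pos: "\<bar>theta p (Suc j)\<bar> > 0" using lb pr by (smt (verit) divide_pos_pos)
    have "\<bar>theta p (Suc j)\<bar> * \<bar>Qf (Suc i) (theta p (Suc j))\<bar> \<le> 4"
      using Rstar_bd[of "Suc i" p "Suc j"] Qf_eval[of "theta p (Suc j)" "Suc i"] by (simp add: abs_mult[symmetric])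
    then have "\<bar>Qf (Suc i) (theta p (Suc j))\<bar> \<le> 4 / \<bar>theta p (Suc j)\<bar>" using pos by (simp add: field_simps)
    also have "\<dots> \<le> 4 / (1 / real p)" using lb pr pos by (intro divide_left_mono) auto
    finally show "\<bar>U $$ (j, i)\<bar> \<le> 4 * real p" using ji by (simp add: Uent)
  qed (use pr in simp)
  have fW: "frob W \<le> real n * (2 / real p)"
  proof (rule frob_bd[OF Wc])
    fix i j assume ij: "i < n" "j < n"
    have "\<bar>theta p (Suc j) * (2 * cheb (Suc i) (theta p (Suc j) / 2))\<bar> \<le> 2 * 2"
      by (subst abs_mult, rule mult_mono) (use theta_le[of p "Suc j"] cheb_theta[of "Suc i" p "Suc j"] in auto)
    then have "\<bar>theta p (Suc j) * (2 * cheb (Suc i) (theta p (Suc j) / 2))\<bar> / (2 * real p) \<le> 4 / (2 * real p)"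
      using pr by (intro divide_right_mono) auto
    moreover have "W $$ (i, j) = theta p (Suc j) * (2 * cheb (Suc i) (theta p (Suc j) / 2)) / (2 * real p)"
      using ij by (simp add: W_def)
    ultimately show "\<bar>W $$ (i, j)\<bar> \<le> 2 / real p" using pr by (simp only: abs_divide)
  qed (use pr in simp)
  have "Cond U \<le> (real n * (4 * real p)) * (real n * (2 / real p))"
    unfolding Cond_def minv
    by (rule mult_mono[OF fU fW]) (use pr frob_nonneg in auto)
  also have "\<dots> = 8 * real n ^ 2" using pr by (simp add: field_simps power2_eq_square)
  also have "\<dots> \<le> 8 * real p ^ 2" using p3 by (simp add: n_def)
  also have "\<dots> \<le> real p ^ 2 * (real p * (real p + 1) * (2 * real p - 1) ^ 2)"
  proof -
    have "real p * (real p + 1) \<ge> 3 * 4" using pr by (intro mult_mono) auto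
    moreover have "(2 * real p - 1) ^ 2 \<ge> 1" using pr by (simp add: one_le_power)
    ultimately have "real p * (real p + 1) * (2 * real p - 1) ^ 2 \<ge> 12 * 1"
      by (intro mult_mono) auto
    then have "8 \<le> real p * (real p + 1) * (2 * real p - 1) ^ 2" by linarith
    then have "real p ^ 2 * 8 \<le> real p ^ 2 * (real p * (real p + 1) * (2 * real p - 1) ^ 2)"
      by (intro mult_left_mono) auto
    then show ?thesis by (simp only: mult.commute)
  qed
  also have "\<dots> = real p ^ 3 * (real p + 1) * (2 * real p - 1) ^ 2"
    by (simp add: power2_eq_square power3_eq_cube)
  finally show ?thesis using deg NPU inv unfolding U_def by blast
qed

end
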